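(* Let $X_0^*$ be a $\{1,2,\dots\}$-valued random variable with $\mathbf P(X_0^*=k)\sim c_0m^{-k}k^{-\alpha}$ as $k\to\infty$, for some $0<c_0<\infty$ and $2\le\alpha\le4$. Let $\ell_0\ge1$ be the smallest integer $k\ge1$ with $\mathbf P(X_0^*=k)>0$. For integers $M>\ell_0$ let $\varrho=\varrho(M,\alpha)$ be as follows: if $\alpha=2$, $\varrho:=0$; if $2<\alpha\le4$, $\varrho$ is independent of $X_0^*$ with $\mathbf P(\varrho=0)=M^{-(\alpha-2)}=1-\mathbf P(\varrho=\ell_0)$. Set $X_0^{(M)}:=\varrho\mathbf 1_{\{X_0^*=\ell_0\}}+X_0^*\mathbf 1_{\{\ell_0<X_0^*\le M\}}$ and $p_M:=\big(1+\mathbf E\{[(m-1)X_0^{(M)}-1]m^{X_0^{(M)}}\}\big)^{-1}$. Then, as $M\to\infty$, $$p_M-p_c(X_0^* )\sim\begin{cases}\frac{c_{48}}{M^{\alpha-2}},&2<\alpha\le4,\\[2pt] \frac{1}{(m-1)c_0}\,\frac{1}{\log M},&\alpha=2,\end{cases}$$ where for $2<\alpha\le4$, $c_{48}:=[p_c(X_0^* )]^2c_{49}>0$ with $$c_{49}:=\frac{(m-1)c_0}{\alpha-2}+\{[(m-1)\ell_0-1]m^{\ell_0}+1\}\,\mathbf P(X_0^*=\ell_0).$$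
   Context: Fix an integer $m\ge2$. $p_c(X_0^* ):=\frac{1}{1+\mathbf E\{[(m-1)X_0^*-1]m^{X_0^*}\}}$, interpreted as $0$ when the expectation is infinite (so $p_c(X_0^* )=0$ when $\alpha=2$ and $p_c(X_0^* )>0$ when $\alpha>2$); it is the critical parameter of the recursive system $X_{n+1}\overset d=(X_{n,1}+\cdots+X_{n,m}-1)^+$ started from the law $(1-p)\delta_0+pP_{X_0^*}$. $a_M\sim b_M$ means $a_M/b_M\to1$. *)

theory Defs
  imports "HOL-Probability.Probability" "HOL-Library.Landau_Symbols"
begin

definition crit_fun :: "nat \<Rightarrow> nat \<Rightarrow> real" where
  "crit_fun m x = ((real m - 1) * real x - 1) * real m ^ x"

text \<open>Critical parameter p_c(X): 1/(1+E f(X)), and 0 when E f(X) is infinite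
  (f is nonnegative on {1,2,...}, so infinite expectation = non-integrability).\<close>
definition p_crit :: "nat \<Rightarrow> nat pmf \<Rightarrow> real" where
  "p_crit m X = (if integrable (measure_pmf X) (crit_fun m)
                 then 1 / (1 + measure_pmf.expectation X (crit_fun m)) else 0)"

definition ell0 :: "nat pmf \<Rightarrow> nat" where
  "ell0 X = (LEAST k. 1 \<le> k \<and> 0 < pmf X k)"

definition rho_pmf :: "nat \<Rightarrow> real \<Rightarrow> nat \<Rightarrow> nat pmf" where
  "rho_pmf M \<alpha> l = (if \<alpha> = 2 then return_pmf 0
      else map_pmf (\<lambda>b. if b then 0 else l) (bernoulli_pmf (real M powr (-(\<alpha> - 2)))))"

definition trunc_pmf :: "nat pmf \<Rightarrow> nat \<Rightarrow> real \<Rightarrow> nat pmf" where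
  "trunc_pmf X M \<alpha> =
     map_pmf (\<lambda>(x, r). (if x = ell0 X then r else 0) + (if ell0 X < x \<and> x \<le> M then x else 0))
       (pair_pmf X (rho_pmf M \<alpha> (ell0 X)))"

definition p_M :: "nat \<Rightarrow> nat pmf \<Rightarrow> real \<Rightarrow> nat \<Rightarrow> real" where
  "p_M m X \<alpha> M = 1 / (1 + measure_pmf.expectation (trunc_pmf X M \<alpha>) (crit_fun m))"

end

theory Submission
  imports Defs "HOL-Analysis.Harmonic_Numbers" "HOL-Real_Asymp.Real_Asymp"
begin


lemma pmf_nat_integrable_iff:
  "integrable (measure_pmf p) (g::nat\<Rightarrow>real) \<longleftrightarrow> summable (\<lambda>k. pmf p k * \<bar>g k\<bar>)"
  unfolding measure_pmf_eq_density
  by (subst integrable_density) (auto simp: integrable_count_space_nat_iff abs_mult pmf_nonneg)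

lemma pmf_nat_expectation:
  assumes "integrable (measure_pmf p) (g::nat\<Rightarrow>real)"
  shows "measure_pmf.expectation p g = (\<Sum>k. pmf p k * g k)"
proof -
  have "integrable (count_space UNIV) (\<lambda>k. pmf p k * g k)"
    using assms unfolding measure_pmf_eq_density
    by (subst (asm) integrable_density) (auto simp: pmf_nonneg)
  then show ?thesis unfolding measure_pmf_eq_density
    by (subst integral_density) (auto simp: pmf_nonneg integral_count_space_nat)
qed


lemma ratio_partial:
  fixes a b :: "nat \<Rightarrow> real"
  assumes bpos: "eventually (\<lambda>k. b k > 0) at_top"
    and lim: "(\<lambda>k. a k / b k) \<longlonglongrightarrow> C"
    and div: "filterlim (\<lambda>M. \<Sum>k\<le>M. b k) at_top at_top"
  shows "(\<lambda>M. (\<Sum>k\<le>M. a k) / (\<Sum>k\<le>M. b k)) \<longlonglongrightarrow> C"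
proof (rule LIMSEQ_I)
  fix r :: real assume r: "0 < r"
  define e where "e = r / 4"
  have e: "e > 0" using r by (simp add: e_def)
  obtain K1 where K1: "\<And>k. k \<ge> K1 \<Longrightarrow> b k > 0" using bpos by (auto simp: eventually_at_top_linorder)
  obtain K2 where K2: "\<And>k. k \<ge> K2 \<Longrightarrow> norm (a k / b k - C) < e"
    using lim e unfolding LIMSEQ_iff by blast
  define K where "K = max K1 K2"
  have key: "\<bar>a k - C * b k\<bar> \<le> e * b k" if "k > K" for k
  proof -
    have bk: "b k > 0" using K1 that by (simp add: K_def)
    have "\<bar>a k / b k - C\<bar> < e" using K2 that by (simp add: K_def)
    moreover have "a k - C * b k = (a k / b k - C) * b k" using bk by (simp add: field_simps)
    ultimately show ?thesis using bk by (simp add: abs_mult)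
  qed
  define c where "c = \<bar>\<Sum>k\<le>K. a k - C * b k\<bar>"
  define d where "d = \<bar>\<Sum>k\<le>K. b k\<bar>"
  have c0: "c \<ge> 0" "d \<ge> 0" by (auto simp: c_def d_def)
  have "eventually (\<lambda>M. (\<Sum>k\<le>M. b k) \<ge> (c + e * d) / e + 1) at_top"
    using div by (simp add: filterlim_at_top)
  then obtain N0 where N0: "\<And>M. M \<ge> N0 \<Longrightarrow> (\<Sum>k\<le>M. b k) \<ge> (c + e * d) / e + 1"
    by (auto simp: eventually_at_top_linorder)
  show "\<exists>no. \<forall>n\<ge>no. norm ((\<Sum>k\<le>n. a k) / (\<Sum>k\<le>n. b k) - C) < r"
  proof (intro exI allI impI)
    fix M assume M: "M \<ge> max N0 K"
    define B where "B = (\<Sum>k\<le>M. b k)"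
    have BB: "B \<ge> (c + e * d) / e + 1" using N0 M by (simp add: B_def)
    have Bpos: "B > 0" using BB c0 e by (smt (verit) divide_nonneg_pos mult_nonneg_nonneg)
    have split: "{..M} = {..K} \<union> {K<..M}" using M by auto
    have "(\<Sum>k\<le>M. a k - C * b k) = (\<Sum>k\<le>K. a k - C * b k) + (\<Sum>k\<in>{K<..M}. a k - C * b k)"
      unfolding split by (subst sum.union_disjoint) auto
    moreover have "\<bar>\<Sum>k\<in>{K<..M}. a k - C * b k\<bar> \<le> (\<Sum>k\<in>{K<..M}. e * b k)"
      by (rule order_trans[OF sum_abs]) (auto intro!: sum_mono key)
    moreover have "(\<Sum>k\<le>M. b k) = (\<Sum>k\<le>K. b k) + (\<Sum>k\<in>{K<..M}. b k)"
      unfolding split by (subst sum.union_disjoint) auto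
    ultimately have "\<bar>(\<Sum>k\<le>M. a k) - C * B\<bar> \<le> c + e * (B + d)"
      unfolding B_def c_def d_def sum_subtractf sum_distrib_left[symmetric]
      by (smt (verit, best) mult_left_mono e)
    also have "\<dots> \<le> e * B + e * B + e * B"
    proof -
      have "c + e * d \<le> e * B" using BB e by (simp add: field_simps)
      then show ?thesis using e Bpos by (smt (verit) mult_pos_pos distrib_left)
    qed
    finally have "\<bar>(\<Sum>k\<le>M. a k) - C * B\<bar> \<le> (3 * e) * B" by (simp add: algebra_simps)
    moreover have "(\<Sum>k\<le>M. a k) / B - C = ((\<Sum>k\<le>M. a k) - C * B) / B"
      using Bpos by (simp add: field_simps)
    ultimately have "\<bar>(\<Sum>k\<le>M. a k) / B - C\<bar> \<le> 3 * e"
      using Bpos by (metis abs_div_pos pos_divide_le_eq)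
    then show "norm ((\<Sum>k\<le>M. a k) / (\<Sum>k\<le>M. b k) - C) < r"
      using r by (simp add: B_def e_def)
  qed
qed



lemma ratio_tail:
  fixes a b :: "nat \<Rightarrow> real"
  assumes bsum: "summable b" and bpos: "eventually (\<lambda>k. b k > 0) at_top"
    and lim: "(\<lambda>k. a k / b k) \<longlonglongrightarrow> C"
  shows "summable a"
    and "(\<lambda>M. (\<Sum>j. a (j + Suc M)) / (\<Sum>j. b (j + Suc M))) \<longlonglongrightarrow> C"
proof -
  obtain K1 where K1: "\<And>k. k \<ge> K1 \<Longrightarrow> b k > 0" using bpos by (auto simp: eventually_at_top_linorder)
  have key: "\<exists>K. \<forall>k\<ge>K. \<bar>a k - C * b k\<bar> \<le> e * b k \<and> b k > 0" if e: "e > 0" for e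
  proof -
    obtain K2 where K2: "\<And>k. k \<ge> K2 \<Longrightarrow> norm (a k / b k - C) < e"
      using lim e unfolding LIMSEQ_iff by blast
    show ?thesis
    proof (intro exI allI impI conjI)
      fix k assume k: "k \<ge> max K1 K2"
      have bk: "b k > 0" using K1 k by simp
      have "\<bar>a k / b k - C\<bar> < e" using K2 k by simp
      moreover have "a k - C * b k = (a k / b k - C) * b k" using bk by (simp add: field_simps)
      ultimately show "\<bar>a k - C * b k\<bar> \<le> e * b k" using bk by (simp add: abs_mult)
      show "b k > 0" by fact
    qed
  qed
  obtain K0 where K0: "\<And>k. k \<ge> K0 \<Longrightarrow> \<bar>a k - C * b k\<bar> \<le> 1 * b k \<and> b k > 0"
    using key[of 1] by auto
  show asum: "summable a"
  proof (rule summable_comparison_test_ev)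
    show "eventually (\<lambda>n. norm (a n) \<le> (\<bar>C\<bar> + 1) * b n) sequentially"
      unfolding eventually_at_top_linorder
    proof (intro exI allI impI)
      fix n assume "n \<ge> K0"
      with K0 have "\<bar>a n - C * b n\<bar> \<le> 1 * b n" "b n > 0" by auto
      moreover have "\<bar>C * b n\<bar> \<le> \<bar>C\<bar> * b n" using \<open>b n > 0\<close> by (simp add: abs_mult)
      ultimately show "norm (a n) \<le> (\<bar>C\<bar> + 1) * b n" by (simp add: algebra_simps)
    qed
    show "summable (\<lambda>n. (\<bar>C\<bar> + 1) * b n)" using bsum by (rule summable_mult)
  qed
  show "(\<lambda>M. (\<Sum>j. a (j + Suc M)) / (\<Sum>j. b (j + Suc M))) \<longlonglongrightarrow> C"
  proof (rule LIMSEQ_I)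
    fix r :: real assume r: "0 < r"
    obtain K where K: "\<And>k. k \<ge> K \<Longrightarrow> \<bar>a k - C * b k\<bar> \<le> (r/2) * b k \<and> b k > 0"
      using key[of "r/2"] r by auto
    show "\<exists>no. \<forall>n\<ge>no. norm ((\<Sum>j. a (j + Suc n)) / (\<Sum>j. b (j + Suc n)) - C) < r"
    proof (intro exI allI impI)
      fix M assume M: "M \<ge> K"
      have sa: "summable (\<lambda>j. a (j + Suc M))" using asum by (subst summable_iff_shift)
      have sb: "summable (\<lambda>j. b (j + Suc M))" using bsum by (subst summable_iff_shift)
      define B where "B = (\<Sum>j. b (j + Suc M))"
      have Bpos: "B > 0" unfolding B_def using sb by (rule suminf_pos) (use K M in auto)
      have "(\<Sum>j. a (j + Suc M)) - C * B = (\<Sum>j. a (j + Suc M) - C * b (j + Suc M))"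
        unfolding B_def using sa sb by (simp add: suminf_diff[symmetric] suminf_mult[symmetric] summable_mult)
      also have "\<bar>\<dots>\<bar> \<le> (\<Sum>j. (r/2) * b (j + Suc M))"
      proof -
        have s1: "summable (\<lambda>j. \<bar>a (j + Suc M) - C * b (j + Suc M)\<bar>)"
          by (rule summable_comparison_test[where g="\<lambda>j. (r/2) * b (j + Suc M)"])
             (use K M sb in \<open>auto intro!: summable_mult\<close>)
        have "\<bar>(\<Sum>j. a (j + Suc M) - C * b (j + Suc M))\<bar> \<le> (\<Sum>j. \<bar>a (j + Suc M) - C * b (j + Suc M)\<bar>)"
          using s1 by (rule summable_rabs)
        also have "\<dots> \<le> (\<Sum>j. (r/2) * b (j + Suc M))"
          by (rule suminf_le) (use K M s1 sb in \<open>auto intro!: summable_mult\<close>)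
        finally show ?thesis .
      qed
      also have "\<dots> = (r/2) * B" unfolding B_def using sb by (rule suminf_mult)
      finally have "\<bar>(\<Sum>j. a (j + Suc M)) - C * B\<bar> \<le> (r/2) * B" .
      moreover have "(\<Sum>j. a (j + Suc M)) / B - C = ((\<Sum>j. a (j + Suc M)) - C * B) / B"
        using Bpos by (simp add: field_simps)
      ultimately have "\<bar>(\<Sum>j. a (j + Suc M)) / B - C\<bar> \<le> r/2"
        using Bpos by (metis abs_div_pos pos_divide_le_eq)
      then show "norm ((\<Sum>j. a (j + Suc M)) / (\<Sum>j. b (j + Suc M)) - C) < r"
        using r by (simp add: B_def)
    qed
  qed
qed



lemma powr_diff_bounds:
  fixes \<beta> x :: real
  assumes b: "\<beta> > 0" and x: "x > 0"
  shows "(x+1) powr (-(1+\<beta>)) \<le> x powr (-\<beta>) / \<beta> - (x+1) powr (-\<beta>) / \<beta>"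
    and "x powr (-\<beta>) / \<beta> - (x+1) powr (-\<beta>) / \<beta> \<le> x powr (-(1+\<beta>))"
proof -
  have "\<exists>z. x < z \<and> z < x + 1 \<and> ((x+1) powr (-\<beta>) / \<beta> - x powr (-\<beta>) / \<beta>
          = ((x+1) - x) * ((-\<beta>) * z powr (-\<beta> - 1) / \<beta>))"
    by (rule MVT2) (use x in \<open>auto intro!: derivative_eq_intros has_real_derivative_powr\<close>)
  then obtain z where z: "x < z" "z < x + 1"
    and eq0: "(x+1) powr (-\<beta>) / \<beta> - x powr (-\<beta>) / \<beta> = ((x+1) - x) * ((-\<beta>) * z powr (-\<beta> - 1) / \<beta>)"
    by blast
  have "-\<beta> - 1 = -(1+\<beta>)" by simp
  with eq0 b have eq: "(x+1) powr (-\<beta>) / \<beta> - x powr (-\<beta>) / \<beta> = - (z powr (-(1+\<beta>)))"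
    by simp
  have eq2: "x powr (-\<beta>) / \<beta> - (x+1) powr (-\<beta>) / \<beta> = z powr (-(1+\<beta>))" using eq by linarith
  show "(x+1) powr (-(1+\<beta>)) \<le> x powr (-\<beta>) / \<beta> - (x+1) powr (-\<beta>) / \<beta>"
    unfolding eq2 by (rule powr_mono2') (use z x b in auto)
  show "x powr (-\<beta>) / \<beta> - (x+1) powr (-\<beta>) / \<beta> \<le> x powr (-(1+\<beta>))"
    unfolding eq2 by (rule powr_mono2') (use z x b in auto)
qed

lemma power_tail:
  fixes \<beta> :: real
  assumes b: "\<beta> > 0"
  shows "(\<lambda>M. real M powr \<beta> * (\<Sum>j. real (j + Suc M) powr (-(1+\<beta>)))) \<longlonglongrightarrow> 1/\<beta>"
proof -
  define h where "h x = x powr (-\<beta>) / \<beta>" for x :: real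
  have h0: "(\<lambda>j. h (real (j + N))) \<longlonglongrightarrow> 0" for N :: nat
    unfolding h_def using b by (real_asymp simp: inverse_eq_divide)
  have tel: "(\<lambda>j. h (real (j + N)) - h (real (Suc j + N))) sums h (real N)" for N
    using telescope_sums'[OF h0[of N]] by simp
  have summ: "summable (\<lambda>j. real (j + Suc M) powr (-(1+\<beta>)))" for M
  proof -
    have "summable (\<lambda>n. real n powr (-(1+\<beta>)))" using b by (subst summable_real_powr_iff) auto
    then show ?thesis by (subst summable_iff_shift)
  qed
  have up: "(\<Sum>j. real (j + Suc M) powr (-(1+\<beta>))) \<le> h (real M)" if M: "M \<ge> 1" for M
  proof -
    have "(\<Sum>j. real (j + Suc M) powr (-(1+\<beta>))) \<le> (\<Sum>j. h (real (j + M)) - h (real (Suc j + M)))"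
    proof (rule suminf_le)
      fix j
      have "real (j + M) > 0" using M by simp
      from powr_diff_bounds(1)[OF b this] show "real (j + Suc M) powr (-(1+\<beta>)) \<le> h (real (j + M)) - h (real (Suc j + M))"
        by (simp add: h_def add_ac)
    qed (use summ tel in \<open>auto simp: sums_iff\<close>)
    also have "\<dots> = h (real M)" using tel[of M] by (simp add: sums_iff)
    finally show ?thesis .
  qed
  have low: "h (real (Suc M)) \<le> (\<Sum>j. real (j + Suc M) powr (-(1+\<beta>)))" for M
  proof -
    have "h (real (Suc M)) = (\<Sum>j. h (real (j + Suc M)) - h (real (Suc j + Suc M)))"
      using tel[of "Suc M"] by (simp add: sums_iff)
    also have "\<dots> \<le> (\<Sum>j. real (j + Suc M) powr (-(1+\<beta>)))"
    proof (rule suminf_le)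
      fix j
      have "real (j + Suc M) > 0" by simp
      from powr_diff_bounds(2)[OF b this] show "h (real (j + Suc M)) - h (real (Suc j + Suc M)) \<le> real (j + Suc M) powr (-(1+\<beta>))"
        by (simp add: h_def add_ac)
    qed (use summ sums_summable[OF tel[of "Suc M"]] in auto)
    finally show ?thesis .
  qed
  show ?thesis
  proof (rule tendsto_sandwich[where f="\<lambda>M. real M powr \<beta> * h (real (Suc M))" and h="\<lambda>M. real M powr \<beta> * h (real M)"])
    show "eventually (\<lambda>M. real M powr \<beta> * h (real (Suc M)) \<le> real M powr \<beta> * (\<Sum>j. real (j + Suc M) powr (-(1+\<beta>)))) sequentially"
      by (intro always_eventually allI mult_left_mono low) simp
    show "eventually (\<lambda>M. real M powr \<beta> * (\<Sum>j. real (j + Suc M) powr (-(1+\<beta>))) \<le> real M powr \<beta> * h (real M)) sequentially"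
      unfolding eventually_at_top_linorder by (intro exI[of _ 1] allI impI mult_left_mono up) auto
    show "(\<lambda>M. real M powr \<beta> * h (real (Suc M))) \<longlonglongrightarrow> 1/\<beta>"
      unfolding h_def using b by (real_asymp simp: inverse_eq_divide)
    show "(\<lambda>M. real M powr \<beta> * h (real M)) \<longlonglongrightarrow> 1/\<beta>"
      unfolding h_def using b by (real_asymp simp: inverse_eq_divide)
  qed
qed



lemma crit_fun_0[simp]: "crit_fun m 0 = -1" by (simp add: crit_fun_def)

lemma rho_facts:
  assumes "l \<ge> 1" "M \<ge> 1" "2 \<le> \<alpha>"
  shows "set_pmf (rho_pmf M \<alpha> l) \<subseteq> {0, l}"
    and "pmf (rho_pmf M \<alpha> l) 0 = (if \<alpha> = 2 then 1 else real M powr (-(\<alpha> - 2)))"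
proof -
  show "set_pmf (rho_pmf M \<alpha> l) \<subseteq> {0, l}" by (auto simp: rho_pmf_def)
  have q: "0 \<le> real M powr (-(\<alpha> - 2))" "real M powr (-(\<alpha> - 2)) \<le> 1"
  proof -
    have "real M powr (-(\<alpha> - 2)) \<le> real M powr 0"
      using assms by (intro powr_mono) auto
    then show "0 \<le> real M powr (-(\<alpha> - 2))" "real M powr (-(\<alpha> - 2)) \<le> 1" using assms by auto
  qed
  have pre: "(\<lambda>b. if b then 0 else l) -` {0} = {True}" using assms by (auto split: if_splits)
  show "pmf (rho_pmf M \<alpha> l) 0 = (if \<alpha> = 2 then 1 else real M powr (-(\<alpha> - 2)))"
    using q by (auto simp: rho_pmf_def pmf_map pre measure_pmf_single)
qed



lemma expect_trunc:
  fixes X :: "nat pmf" and m :: nat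
  defines "l \<equiv> ell0 X"
  defines "u \<equiv> \<lambda>k. (crit_fun m k + 1) * pmf X k"
  assumes l1: "l \<ge> 1" and below: "\<And>k. k < l \<Longrightarrow> pmf X k = 0"
    and Ml: "M \<ge> l" and \<alpha>: "2 \<le> \<alpha>"
  shows "measure_pmf.expectation (trunc_pmf X M \<alpha>) (crit_fun m)
         = -1 - pmf (rho_pmf M \<alpha> l) 0 * u l + (\<Sum>k\<le>M. u k)"
proof -
  define \<rho> where "\<rho> = rho_pmf M \<alpha> l"
  define g where "g = (\<lambda>(x, r). (if x = l then r else 0) + (if l < x \<and> x \<le> M then x else 0))"
  define G where "G = (\<lambda>z. crit_fun m (g z) + 1)"
  have M1: "M \<ge> 1" using l1 Ml by simp
  have setr: "set_pmf \<rho> \<subseteq> {0, l}" using rho_facts(1)[OF l1 M1 \<alpha>] by (simp add: \<rho>_def)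
  have gle: "g z \<le> l + M" if "snd z \<in> {0, l}" for z
    using that by (auto simp: g_def split: prod.splits)
  define B where "B = (\<Sum>n\<le>l+M. \<bar>crit_fun m n\<bar>) + 1"
  have Gb: "norm (G z) \<le> B" if "snd z \<in> {0, l}" for z
  proof -
    have "\<bar>crit_fun m (g z)\<bar> \<le> (\<Sum>n\<le>l+M. \<bar>crit_fun m n\<bar>)"
      by (rule member_le_sum) (use gle[of z] that in auto)
    then show ?thesis by (simp add: G_def B_def)
  qed
  have intG: "integrable (measure_pmf (pair_pmf X \<rho>)) G"
    by (rule measure_pmf.integrable_const_bound[where B=B]) (use setr Gb in \<open>auto intro!: AE_pmfI\<close>)
  have "measure_pmf.expectation (trunc_pmf X M \<alpha>) (crit_fun m)
        = measure_pmf.expectation (pair_pmf X \<rho>) (\<lambda>z. G z - 1)"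
    unfolding trunc_pmf_def l_def[symmetric] \<rho>_def[symmetric] G_def g_def by simp
  also have "\<dots> = measure_pmf.expectation (pair_pmf X \<rho>) G - 1"
    using intG by (subst Bochner_Integration.integral_diff) auto
  also have "measure_pmf.expectation (pair_pmf X \<rho>) G
     = (\<Sum>z\<in>{..M} \<times> {0, l}. pmf (pair_pmf X \<rho>) z *\<^sub>R G z)"
  proof (rule integral_measure_pmf)
    fix z assume z: "z \<in> set_pmf (pair_pmf X \<rho>)" "G z \<noteq> 0"
    obtain a b where ab: "z = (a, b)" by (cases z)
    have "b \<in> {0, l}" using z setr ab by auto
    moreover have "g z \<noteq> 0"
    proof
      assume "g z = 0" then have "G z = 0" by (simp add: G_def)
      with z(2) show False by simp
    qed
    then have "a \<le> M" using Ml by (auto simp: g_def ab split: if_splits)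
    ultimately show "z \<in> {..M} \<times> {0, l}" using ab by auto
  qed simp
  also have "\<dots> = (\<Sum>a\<le>M. \<Sum>b\<in>{0, l}. pmf X a * pmf \<rho> b * G (a, b))"
    by (simp add: sum.cartesian_product pmf_pair case_prod_beta)
       (rule sum.cong, auto simp: pmf_pair)
  also have "\<dots> = (\<Sum>a\<le>M. u a - (if a = l then pmf \<rho> 0 * u l else 0))"
  proof (rule sum.cong[OF refl])
    fix a assume a: "a \<in> {..M}"
    have l0: "l \<noteq> 0" using l1 by simp
    have s1: "pmf \<rho> 0 + pmf \<rho> l = 1"
      using sum_pmf_eq_1[OF _ setr] l0 by simp
    show "(\<Sum>b\<in>{0, l}. pmf X a * pmf \<rho> b * G (a, b)) = u a - (if a = l then pmf \<rho> 0 * u l else 0)"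
    proof (cases "a < l")
      case True
      then show ?thesis using below[OF True] l0 by (simp add: u_def G_def g_def)
    next
      case False
      show ?thesis
      proof (cases "a = l")
        case True
        have "(\<Sum>b\<in>{0, l}. pmf X a * pmf \<rho> b * G (a, b)) = pmf X l * pmf \<rho> l * (crit_fun m l + 1)"
          using l0 True by (simp add: G_def g_def)
        moreover have "pmf \<rho> l = 1 - pmf \<rho> 0" using s1 by simp
        ultimately show ?thesis using True by (simp add: u_def algebra_simps)
      next
        case False2: False
        then have "l < a" "a \<le> M" using False a by auto
        then have "(\<Sum>b\<in>{0, l}. pmf X a * pmf \<rho> b * G (a, b)) = pmf X a * (pmf \<rho> 0 + pmf \<rho> l) * (crit_fun m a + 1)"
          using l0 by (simp add: G_def g_def algebra_simps)
        then show ?thesis using s1 False2 by (simp add: u_def)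
      qed
    qed
  qed
  also have "\<dots> = (\<Sum>a\<le>M. u a) - pmf \<rho> 0 * u l"
    using Ml by (simp add: sum_subtractf)
  finally show ?thesis by (simp add: \<rho>_def)
qed



lemma aux_lim:
  fixes b :: real assumes "b > 1"
  shows "(\<lambda>k::nat. c0 * ((b - 1) - 1 / real k + b powr (- real k) / real k)) \<longlonglongrightarrow> c0 * (b - 1)"
  using assms by real_asymp

lemma ratio_u:
  fixes X :: "nat pmf" and m :: nat and c0 \<alpha> :: real
  assumes m: "m \<ge> 2" and c0: "0 < c0"
    and as: "(\<lambda>k. pmf X k) \<sim>[at_top] (\<lambda>k. c0 * real m powr (- real k) * real k powr (- \<alpha>))"
  shows "eventually (\<lambda>k. pmf X k > 0) at_top"
    and "(\<lambda>k. ((crit_fun m k + 1) * pmf X k) / real k powr (1 - \<alpha>)) \<longlonglongrightarrow> (real m - 1) * c0"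
proof -
  define w where "w k = c0 * real m powr (- real k) * real k powr (- \<alpha>)" for k :: nat
  have wpos: "w k > 0" if "k > 0" for k using that c0 m by (simp add: w_def)
  have r1: "(\<lambda>k. pmf X k / w k) \<longlonglongrightarrow> 1"
    using asymp_equivD_strong[OF as[folded w_def]] wpos
    by (metis (mono_tags, lifting) eventually_at_top_linorder gr0I le_refl less_le_not_le not_less_eq_eq) 
  have ev: "eventually (\<lambda>k. pmf X k / w k > 1/2) at_top"
    using order_tendstoD(1)[OF r1, of "1/2"] by simp
  show "eventually (\<lambda>k. pmf X k > 0) at_top"
    using eventually_conj[OF ev eventually_gt_at_top[of 0]]
  proof (rule eventually_mono)
    fix k assume k: "1/2 < pmf X k / w k \<and> 0 < k"
    then have "w k > 0" using wpos by auto
    with k have "pmf X k / w k > 0" by linarith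
    with \<open>w k > 0\<close> show "pmf X k > 0" by (simp add: zero_less_divide_iff)
  qed
  have eq: "((crit_fun m k + 1) * pmf X k) / real k powr (1 - \<alpha>)
        = (pmf X k / w k) * (c0 * ((real m - 1) - 1 / real k + real m powr (- real k) / real k))"
    if k: "k > 0" for k
  proof -
    have mp: "real m powr (- real k) * real m ^ k = 1"
      using m by (simp add: powr_minus powr_realpow field_simps)
    have kp: "real k powr (1 - \<alpha>) = real k * real k powr (- \<alpha>)"
      using k by (simp add: powr_diff powr_minus divide_inverse)
    have wk: "w k > 0" using wpos k by simp
    have "w k * (crit_fun m k + 1) = c0 * real k powr (- \<alpha>) * (((real m - 1) * real k - 1) + real m powr (- real k))"
      unfolding w_def crit_fun_def using mp by (simp add: algebra_simps)
    moreover have "c0 * ((real m - 1) - 1 / real k + real m powr (- real k) / real k)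
        = c0 * (((real m - 1) * real k - 1) + real m powr (- real k)) / real k"
      using k by (simp add: field_simps)
    moreover have "real k powr (- \<alpha>) > 0" using k by simp
    ultimately have H: "(c0 * ((real m - 1) - 1 / real k + real m powr (- real k) / real k)) = w k * (crit_fun m k + 1) / real k powr (1 - \<alpha>)"
      unfolding kp by simp
    show ?thesis unfolding H using wk by simp
  qed
  have "(\<lambda>k. (pmf X k / w k) * (c0 * ((real m - 1) - 1 / real k + real m powr (- real k) / real k)))
        \<longlonglongrightarrow> 1 * (c0 * (real m - 1))"
    by (intro tendsto_mult r1 aux_lim) (use m in simp)
  then have "(\<lambda>k. (pmf X k / w k) * (c0 * ((real m - 1) - 1 / real k + real m powr (- real k) / real k)))
        \<longlonglongrightarrow> (real m - 1) * c0" by (simp add: mult.commute)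
  then show "(\<lambda>k. ((crit_fun m k + 1) * pmf X k) / real k powr (1 - \<alpha>)) \<longlonglongrightarrow> (real m - 1) * c0"
  proof (rule Lim_transform_eventually)
    show "\<forall>\<^sub>F k in sequentially. pmf X k / w k * (c0 * (real m - 1 - 1 / real k + real m powr - real k / real k)) =
         (crit_fun m k + 1) * pmf X k / real k powr (1 - \<alpha>)"
      unfolding eventually_at_top_linorder by (intro exI[of _ 1] allI impI eq[symmetric]) auto
  qed
qed



lemma harm_powr: "(\<Sum>k\<le>M. real k powr (1 - 2)) = harm M"
proof (induction M)
  case 0 then show ?case by (simp add: harm_def)
next
  case (Suc M)
  have "real (Suc M) powr (1 - 2) = inverse (real (Suc M))"
    by (simp add: powr_minus)
  then show ?case using Suc by (simp add: harm_Suc)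
qed

lemma harm_at_top: "filterlim (\<lambda>M. harm M :: real) at_top at_top"
proof (rule filterlim_at_top_mono[where f="\<lambda>n. ln (real n + 1)"])
  show "filterlim (\<lambda>n. ln (real n + 1)) at_top at_top" by real_asymp
  show "\<forall>\<^sub>F x in at_top. ln (real x + 1) \<le> harm x" by (intro always_eventually allI ln_le_harm)
qed

lemma harm_ln: "(\<lambda>M. harm M / ln (real M) :: real) \<longlonglongrightarrow> 1"
proof -
  have "(\<lambda>M. 1 + (harm M - ln (real M)) / ln (real M) :: real) \<longlonglongrightarrow> 1 + 0"
    by (intro tendsto_add tendsto_const tendsto_divide_0[OF euler_mascheroni_LIMSEQ]) real_asymp
  then have "(\<lambda>M. 1 + (harm M - ln (real M)) / ln (real M) :: real) \<longlonglongrightarrow> 1" by simp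
  then show ?thesis
  proof (rule Lim_transform_eventually)
    show "\<forall>\<^sub>F M in sequentially. 1 + (harm M - ln (real M)) / ln (real M) = harm M / ln (real M)"
      unfolding eventually_at_top_linorder
    proof (intro exI[of _ 2] allI impI)
      fix M :: nat assume "M \<ge> 2"
      then have "ln (real M) > 0" by simp
      then show "1 + (harm M - ln (real M)) / ln (real M) = harm M / ln (real M)"
        by (simp add: field_simps)
    qed
  qed
qed



lemma crit_fun_nonneg: assumes "m \<ge> 2" "k \<ge> 1" shows "crit_fun m k \<ge> 0"
proof -
  have "real k * real m \<ge> real k * 2" using assms by (intro mult_left_mono) auto
  moreover have "(real m - 1) * real k - 1 = real k * real m - real k - 1" by (simp add: algebra_simps)
  moreover have "real k \<ge> 1" using assms by simp
  ultimately have "(real m - 1) * real k - 1 \<ge> 0" by linarith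
  then show ?thesis unfolding crit_fun_def by simp
qed

lemma crit_fun_p1_nonneg: "m \<ge> 2 \<Longrightarrow> crit_fun m k + 1 \<ge> 0"
  by (cases "k = 0") (auto dest: crit_fun_nonneg[of m k])

lemma ell0_facts:
  assumes "m \<ge> 2" "pmf X 0 = 0" "0 < c0"
    and "(\<lambda>k. pmf X k) \<sim>[at_top] (\<lambda>k. c0 * real m powr (- real k) * real k powr (- \<alpha>))"
  shows "ell0 X \<ge> 1" "pmf X (ell0 X) > 0" "\<And>k. k < ell0 X \<Longrightarrow> pmf X k = 0"
proof -
  obtain N where N: "\<And>k. k \<ge> N \<Longrightarrow> pmf X k > 0"
    using ratio_u(1)[OF assms(1,3,4)] by (auto simp: eventually_at_top_linorder)
  have ex: "\<exists>k. 1 \<le> k \<and> 0 < pmf X k" using N[of "max N 1"] by (intro exI[of _ "max N 1"]) auto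
  have l: "1 \<le> ell0 X \<and> 0 < pmf X (ell0 X)" unfolding ell0_def by (rule LeastI_ex[OF ex])
  then show "ell0 X \<ge> 1" "pmf X (ell0 X) > 0" by auto
  fix k assume k: "k < ell0 X"
  show "pmf X k = 0"
  proof (rule ccontr)
    assume "pmf X k \<noteq> 0"
    then have "pmf X k > 0" using pmf_nonneg[of X k] by linarith
    moreover have "k \<noteq> 0" using assms(2) \<open>pmf X k \<noteq> 0\<close> by metis
    ultimately have "ell0 X \<le> k" unfolding ell0_def by (intro Least_le) auto
    with k show False by simp
  qed
qed

lemma pM_formula:
  assumes "m \<ge> 2" "pmf X 0 = 0" "0 < c0" "2 \<le> \<alpha>"
    and "(\<lambda>k. pmf X k) \<sim>[at_top] (\<lambda>k. c0 * real m powr (- real k) * real k powr (- \<alpha>))"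
    and M: "M \<ge> ell0 X"
  shows "p_M m X \<alpha> M = 1 / ((\<Sum>k\<le>M. (crit_fun m k + 1) * pmf X k)
             - (if \<alpha> = 2 then 1 else real M powr (-(\<alpha> - 2))) * ((crit_fun m (ell0 X) + 1) * pmf X (ell0 X)))"
proof -
  note l = ell0_facts[OF assms(1,2,3,5)]
  have M1: "M \<ge> 1" using l(1) M by simp
  have r: "pmf (rho_pmf M \<alpha> (ell0 X)) 0 = (if \<alpha> = 2 then 1 else real M powr (-(\<alpha> - 2)))"
    by (rule rho_facts(2)[OF l(1) M1 assms(4)])
  show ?thesis
  proof -
    have e: "measure_pmf.expectation (trunc_pmf X M \<alpha>) (crit_fun m) = -1 - pmf (rho_pmf M \<alpha> (ell0 X)) 0 * ((crit_fun m (ell0 X) + 1) * pmf X (ell0 X)) + (\<Sum>k\<le>M. (crit_fun m k + 1) * pmf X k)"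
      using expect_trunc[OF l(1) l(3) M assms(4), of m] by simp
    show ?thesis unfolding p_M_def e r by simp
  qed
qed



lemma case_eq2:
  assumes m: "m \<ge> 2" and X0: "pmf X 0 = 0" and c0: "0 < c0" and a2: "\<alpha> = 2"
    and as: "(\<lambda>k. pmf X k) \<sim>[at_top] (\<lambda>k. c0 * real m powr (- real k) * real k powr (- \<alpha>))"
  shows "(\<lambda>M. p_M m X \<alpha> M - p_crit m X) \<sim>[at_top]
             (\<lambda>M. 1 / ((real m - 1) * c0) * (1 / ln (real M)))"
proof -
  define l where "l = ell0 X"
  define u where "u k = (crit_fun m k + 1) * pmf X k" for k
  define U where "U M = (\<Sum>k\<le>M. u k)" for M
  define C where "C = (real m - 1) * c0"
  have Cpos: "C > 0" using m c0 by (simp add: C_def)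
  have unn: "u k \<ge> 0" for k unfolding u_def using crit_fun_p1_nonneg[OF m] by simp
  have rat: "(\<lambda>k. u k / real k powr (1 - 2)) \<longlonglongrightarrow> C"
    using ratio_u(2)[OF m c0 as] a2 by (simp add: u_def C_def)
  have UH: "(\<lambda>M. U M / harm M) \<longlonglongrightarrow> C"
  proof -
    have "(\<lambda>M. (\<Sum>k\<le>M. u k) / (\<Sum>k\<le>M. real k powr (1 - 2))) \<longlonglongrightarrow> C"
    proof (rule ratio_partial[OF _ rat])
      show "filterlim (\<lambda>M. \<Sum>k\<le>M. real k powr (1 - 2)) at_top sequentially"
        unfolding harm_powr by (rule harm_at_top)
    qed (auto simp: eventually_at_top_linorder intro!: exI[of _ 1])
    then show ?thesis unfolding harm_powr U_def .
  qed
  have UL: "(\<lambda>M. U M / ln (real M)) \<longlonglongrightarrow> C"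
  proof -
    have "(\<lambda>M. (U M / harm M) * (harm M / ln (real M))) \<longlonglongrightarrow> C * 1"
      by (intro tendsto_mult UH harm_ln)
    then have "(\<lambda>M. (U M / harm M) * (harm M / ln (real M))) \<longlonglongrightarrow> C" by simp
    then show ?thesis
    proof (rule Lim_transform_eventually)
      show "\<forall>\<^sub>F M in sequentially. U M / harm M * (harm M / ln (real M)) = U M / ln (real M)"
        unfolding eventually_at_top_linorder
      proof (intro exI[of _ 1] allI impI)
        fix M :: nat assume "M \<ge> 1"
        then have "harm M > (0::real)" by (intro harm_pos) simp
        moreover have gen: "\<And>a h b::real. h \<noteq> 0 \<Longrightarrow> a / h * (h / b) = a / b" by simp
        ultimately show "U M / harm M * (harm M / ln (real M)) = U M / ln (real M)" by (metis less_irrefl)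
      qed
    qed
  qed
  have lnt: "filterlim (\<lambda>M. ln (real M)) at_top sequentially" by real_asymp
  have Ut: "filterlim U at_top sequentially"
  proof -
    have "filterlim (\<lambda>M. U M / ln (real M) * ln (real M)) at_top sequentially"
      by (rule filterlim_tendsto_pos_mult_at_top[OF UL Cpos lnt])
    then show ?thesis
    proof (rule filterlim_cong[THEN iffD1, rotated 3])
      show "\<forall>\<^sub>F x in sequentially. U x / ln (real x) * ln (real x) = U x"
        unfolding eventually_at_top_linorder by (intro exI[of _ 2] allI impI) auto
    qed auto
  qed
  have pc: "p_crit m X = 0"
  proof (cases "integrable (measure_pmf X) (crit_fun m)")
    case True
    have s1: "summable (\<lambda>k. pmf X k * \<bar>crit_fun m k\<bar>)" using True pmf_nat_integrable_iff by blast
    have s2: "summable (\<lambda>k. pmf X k * \<bar>1::real\<bar>)"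
      using pmf_nat_integrable_iff[of X "\<lambda>_. 1"] by simp
    have su: "summable u"
    proof (rule summable_comparison_test[OF _ summable_add[OF s1 s2]])
      show "\<exists>N. \<forall>n\<ge>N. norm (u n) \<le> pmf X n * \<bar>crit_fun m n\<bar> + pmf X n * \<bar>1\<bar>"
      proof (intro exI allI impI)
        fix n :: nat
        have "crit_fun m n * pmf X n \<le> \<bar>crit_fun m n\<bar> * pmf X n"
          by (intro mult_right_mono pmf_nonneg) simp
        then show "norm (u n) \<le> pmf X n * \<bar>crit_fun m n\<bar> + pmf X n * \<bar>1\<bar>"
          using unn[of n] by (simp add: u_def algebra_simps)
      qed
    qed
    have "eventually (\<lambda>M. U M > suminf u) sequentially"
      using Ut by (simp add: filterlim_at_top_dense)
    then obtain M where "U M > suminf u" by (auto simp: eventually_at_top_linorder)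
    moreover have "U M \<le> suminf u" unfolding U_def by (rule sum_le_suminf[OF su]) (auto simp: unn)
    ultimately show ?thesis by simp
  next
    case False then show ?thesis by (simp add: p_crit_def)
  qed
  have pMf: "p_M m X \<alpha> M = 1 / (U M - u l)" if "M \<ge> l" for M
    using pM_formula[OF m X0 c0 _ as, of M] that a2 by (simp add: U_def u_def l_def)
  have L0: "(\<lambda>M. u l / ln (real M)) \<longlonglongrightarrow> 0"
    by (rule tendsto_divide_0[OF tendsto_const filterlim_at_top_imp_at_infinity[OF lnt]])
  have R: "(\<lambda>M. C / (U M / ln (real M) - u l / ln (real M))) \<longlonglongrightarrow> C / (C - 0)"
    by (intro tendsto_intros UL L0) (use Cpos in simp)
  have pos: "eventually (\<lambda>M. U M / ln (real M) - u l / ln (real M) > 0) sequentially"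
    using order_tendstoD(1)[OF tendsto_diff[OF UL L0], of 0] Cpos by simp
  show ?thesis
  proof (rule asymp_equivI')
    show "((\<lambda>M. (p_M m X \<alpha> M - p_crit m X) / (1 / ((real m - 1) * c0) * (1 / ln (real M)))) \<longlongrightarrow> 1) sequentially"
    proof (rule Lim_transform_eventually)
      show "(\<lambda>M. C / (U M / ln (real M) - u l / ln (real M))) \<longlonglongrightarrow> 1"
        using R Cpos by simp
      show "\<forall>\<^sub>F M in sequentially. C / (U M / ln (real M) - u l / ln (real M)) = (p_M m X \<alpha> M - p_crit m X) / (1 / ((real m - 1) * c0) * (1 / ln (real M)))"
        using eventually_conj[OF pos eventually_ge_at_top[of "max l 2"]]
      proof (rule eventually_mono)
        fix M assume M: "0 < U M / ln (real M) - u l / ln (real M) \<and> max l 2 \<le> M"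
        then have lnp: "ln (real M) > 0" by simp
        have "U M / ln (real M) - u l / ln (real M) = (U M - u l) / ln (real M)"
          by (simp add: diff_divide_distrib)
        with M lnp have D: "U M - u l > 0" by (simp add: zero_less_divide_iff)
        show "C / (U M / ln (real M) - u l / ln (real M)) = (p_M m X \<alpha> M - p_crit m X) / (1 / ((real m - 1) * c0) * (1 / ln (real M)))"
          using M D lnp by (simp add: pMf pc C_def field_simps)
      qed
    qed
  qed
qed



lemma case_gt2:
  assumes m: "m \<ge> 2" and X0: "pmf X 0 = 0" and c0: "0 < c0" and a2: "2 < \<alpha>"
    and as: "(\<lambda>k. pmf X k) \<sim>[at_top] (\<lambda>k. c0 * real m powr (- real k) * real k powr (- \<alpha>))"
  shows "(let c49 = (real m - 1) * c0 / (\<alpha> - 2)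
                      + (((real m - 1) * real (ell0 X) - 1) * real m ^ ell0 X + 1) * pmf X (ell0 X);
                c48 = (p_crit m X)\<^sup>2 * c49
            in 0 < c48 \<and>
               (\<lambda>M. p_M m X \<alpha> M - p_crit m X) \<sim>[at_top] (\<lambda>M. c48 / real M powr (\<alpha> - 2)))"
proof -
  define l where "l = ell0 X"
  define u where "u k = (crit_fun m k + 1) * pmf X k" for k
  define v where "v k = real k powr (1 - \<alpha>)" for k
  define \<beta> where "\<beta> = \<alpha> - 2"
  have b: "\<beta> > 0" using a2 by (simp add: \<beta>_def)
  define C where "C = (real m - 1) * c0"
  have Cpos: "C > 0" using m c0 by (simp add: C_def)
  note lf = ell0_facts[OF m X0 c0 as, folded l_def]
  have unn: "u k \<ge> 0" for k unfolding u_def using crit_fun_p1_nonneg[OF m] by simp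
  have ulpos: "u l > 0" unfolding u_def using lf crit_fun_nonneg[OF m, of l] by simp
  have rat: "(\<lambda>k. u k / v k) \<longlonglongrightarrow> C"
    using ratio_u(2)[OF m c0 as] by (simp add: u_def C_def v_def)
  have vsum: "summable v" unfolding v_def using a2 by (subst summable_real_powr_iff) auto
  have vpos: "eventually (\<lambda>k. v k > 0) sequentially"
    unfolding v_def eventually_at_top_linorder by (intro exI[of _ 1]) auto
  note RT = ratio_tail[OF vsum vpos rat]
  have su: "summable u" by (rule RT(1))
  define T where "T M = (\<Sum>j. u (j + Suc M))" for M
  define V where "V M = (\<Sum>j. v (j + Suc M))" for M
  have TV: "(\<lambda>M. T M / V M) \<longlonglongrightarrow> C" using RT(2) by (simp add: T_def V_def)
  have MV: "(\<lambda>M. real M powr \<beta> * V M) \<longlonglongrightarrow> 1/\<beta>"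
  proof -
    have h: "1 - \<alpha> = - 1 - \<beta>" by (simp add: \<beta>_def)
    show ?thesis using power_tail[OF b] by (simp add: V_def v_def h)
  qed
  have Vpos: "V M > 0" for M
  proof -
    have "summable (\<lambda>j. v (j + Suc M))" using vsum by (subst summable_iff_shift)
    then show ?thesis unfolding V_def by (rule suminf_pos) (auto simp: v_def)
  qed
  have MT: "(\<lambda>M. real M powr \<beta> * T M) \<longlonglongrightarrow> C / \<beta>"
  proof -
    have "(\<lambda>M. (T M / V M) * (real M powr \<beta> * V M)) \<longlonglongrightarrow> C * (1/\<beta>)"
      by (intro tendsto_mult TV MV)
    moreover have "(T M / V M) * (real M powr \<beta> * V M) = real M powr \<beta> * T M" for M
      using Vpos[of M] by (simp add: field_simps)
    ultimately show ?thesis by simp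
  qed
  have T0: "T \<longlonglongrightarrow> 0"
  proof -
    have "(\<lambda>M. real M powr (-\<beta>) * (real M powr \<beta> * T M)) \<longlonglongrightarrow> 0 * (C / \<beta>)"
      by (intro tendsto_mult MT) (use b in real_asymp)
    then have "(\<lambda>M. real M powr (-\<beta>) * (real M powr \<beta> * T M)) \<longlonglongrightarrow> 0" by simp
    then show ?thesis
    proof (rule Lim_transform_eventually)
      show "\<forall>\<^sub>F M in sequentially. real M powr (-\<beta>) * (real M powr \<beta> * T M) = T M"
        unfolding eventually_at_top_linorder
        by (intro exI[of _ 1] allI impI) (simp add: powr_minus field_simps)
    qed
  qed
  define q where "q M = real M powr (-(\<alpha> - 2))" for M :: nat
  have q0: "q \<longlonglongrightarrow> 0" unfolding q_def using b[unfolded \<beta>_def] by real_asymp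
  have qM: "real M powr \<beta> * q M = 1" if "M \<ge> 1" for M
    using that by (simp add: q_def \<beta>_def powr_add[symmetric])
  define S where "S = suminf u"
  have Sge: "u l \<le> S" unfolding S_def using sum_le_suminf[OF su, of "{l}"] unn by simp
  have Spos: "S > 0" using Sge ulpos by simp
  have s2: "summable (\<lambda>k. pmf X k * \<bar>1::real\<bar>)"
    using pmf_nat_integrable_iff[of X "\<lambda>_. 1"] by simp
  have sum1: "(\<Sum>k. pmf X k) = 1"
    using pmf_nat_expectation[of X "\<lambda>_. 1"] by simp
  have int: "integrable (measure_pmf X) (crit_fun m)"
    unfolding pmf_nat_integrable_iff
  proof (rule summable_comparison_test[OF _ su])
    show "\<exists>N. \<forall>n\<ge>N. norm (pmf X n * \<bar>crit_fun m n\<bar>) \<le> u n"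
    proof (intro exI allI impI)
      fix n :: nat
      show "norm (pmf X n * \<bar>crit_fun m n\<bar>) \<le> u n"
      proof (cases "n = 0")
        case True then show ?thesis using X0 by (simp add: u_def)
      next
        case False
        then have "crit_fun m n \<ge> 0" using crit_fun_nonneg[OF m, of n] by simp
        then show ?thesis by (simp add: u_def algebra_simps)
      qed
    qed
  qed
  have E: "measure_pmf.expectation X (crit_fun m) = S - 1"
  proof -
    have "measure_pmf.expectation X (crit_fun m) = (\<Sum>k. pmf X k * crit_fun m k)"
      by (rule pmf_nat_expectation[OF int])
    also have "\<dots> = (\<Sum>k. u k - pmf X k)" by (simp add: u_def algebra_simps)
    also have "\<dots> = S - 1"
    proof -
      have s3: "summable (\<lambda>k. pmf X k)" using s2 by simp
      show ?thesis unfolding S_def using suminf_diff[OF su s3] sum1 by simp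
    qed
    finally show ?thesis .
  qed
  have pc: "p_crit m X = 1 / S" using int E by (simp add: p_crit_def)
  have US: "(\<Sum>k\<le>M. u k) = S - T M" for M
    using suminf_split_initial_segment[OF su, of "Suc M"] by (simp add: S_def T_def lessThan_Suc_atMost)
  have pMf: "p_M m X \<alpha> M = 1 / (S - T M - q M * u l)" if "M \<ge> l" for M
    using pM_formula[OF m X0 c0 _ as, of M] that a2 by (simp add: US[symmetric] u_def l_def q_def)
  define c49 where "c49 = C / \<beta> + u l"
  have c49pos: "c49 > 0" unfolding c49_def using divide_pos_pos[OF Cpos b] ulpos by linarith
  have c49eq: "(real m - 1) * c0 / (\<alpha> - 2)
                      + (((real m - 1) * real (ell0 X) - 1) * real m ^ ell0 X + 1) * pmf X (ell0 X) = c49"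
    by (simp add: c49_def C_def \<beta>_def u_def l_def crit_fun_def)
  have D: "(\<lambda>M. S - T M - q M * u l) \<longlonglongrightarrow> S - 0 - 0 * u l"
    by (intro tendsto_intros T0 q0)
  have R: "(\<lambda>M. (real M powr \<beta> * T M + u l) * S / ((S - T M - q M * u l) * c49)) \<longlonglongrightarrow>
           (C / \<beta> + u l) * S / ((S - 0 - 0 * u l) * c49)"
    by (intro tendsto_intros MT D) (use Spos c49pos in simp)
  have R1: "(\<lambda>M. (real M powr \<beta> * T M + u l) * S / ((S - T M - q M * u l) * c49)) \<longlonglongrightarrow> 1"
    using R Spos c49pos by (simp add: c49_def)
  have Dpos: "eventually (\<lambda>M. S - T M - q M * u l > 0) sequentially"
    using order_tendstoD(1)[OF D, of 0] Spos by simp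
  show ?thesis
    unfolding Let_def c49eq
  proof
    show "0 < (p_crit m X)\<^sup>2 * c49" using pc Spos c49pos by simp
    show "(\<lambda>M. p_M m X \<alpha> M - p_crit m X) \<sim>[sequentially] (\<lambda>M. (p_crit m X)\<^sup>2 * c49 / real M powr (\<alpha> - 2))"
    proof (rule asymp_equivI')
      show "((\<lambda>M. (p_M m X \<alpha> M - p_crit m X) / ((p_crit m X)\<^sup>2 * c49 / real M powr (\<alpha> - 2))) \<longlongrightarrow> 1) sequentially"
      proof (rule Lim_transform_eventually[OF R1])
        show "\<forall>\<^sub>F M in sequentially. (real M powr \<beta> * T M + u l) * S / ((S - T M - q M * u l) * c49) =
              (p_M m X \<alpha> M - p_crit m X) / ((p_crit m X)\<^sup>2 * c49 / real M powr (\<alpha> - 2))"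
          using eventually_conj[OF Dpos eventually_ge_at_top[of "max l 1"]]
        proof (rule eventually_mono)
          fix M assume M: "0 < S - T M - q M * u l \<and> max l 1 \<le> M"
          define Dm where "Dm = S - T M - q M * u l"
          have Dm: "Dm > 0" using M by (simp add: Dm_def)
          have Mb: "real M powr \<beta> > 0" using M by simp
          have e1: "real M powr \<beta> * T M + u l = real M powr \<beta> * (T M + q M * u l)"
            using qM[of M] M by (simp add: algebra_simps)
          have e2: "p_M m X \<alpha> M - p_crit m X = (T M + q M * u l) / (Dm * S)"
          proof -
            have "p_M m X \<alpha> M = 1 / Dm" using M pMf by (simp add: Dm_def)
            then have "p_M m X \<alpha> M - p_crit m X = 1 / Dm - 1 / S" using pc by simp
            also have "\<dots> = (S - Dm) / (Dm * S)" using Dm Spos by (simp add: field_simps)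
            also have "S - Dm = T M + q M * u l" by (simp add: Dm_def)
            finally show ?thesis .
          qed
          show "(real M powr \<beta> * T M + u l) * S / ((S - T M - q M * u l) * c49) =
              (p_M m X \<alpha> M - p_crit m X) / ((p_crit m X)\<^sup>2 * c49 / real M powr (\<alpha> - 2))"
            unfolding e1 e2 Dm_def[symmetric] \<beta>_def[symmetric] unfolding pc
            using Dm Spos c49pos Mb by (simp add: field_simps power2_eq_square)
        qed
      qed
    qed
  qed
qed


theorem lemma8p3:
  fixes m :: nat and X :: "nat pmf" and c0 \<alpha> :: real
  assumes "m \<ge> 2"
    and "pmf X 0 = 0"
    and "0 < c0"
    and "2 \<le> \<alpha>" and "\<alpha> \<le> 4"
    and "(\<lambda>k. pmf X k) \<sim>[at_top] (\<lambda>k. c0 * real m powr (- real k) * real k powr (- \<alpha>))"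
  shows "(2 < \<alpha> \<longrightarrow>
           (let c49 = (real m - 1) * c0 / (\<alpha> - 2)
                      + (((real m - 1) * real (ell0 X) - 1) * real m ^ ell0 X + 1) * pmf X (ell0 X);
                c48 = (p_crit m X)\<^sup>2 * c49
            in 0 < c48 \<and>
               (\<lambda>M. p_M m X \<alpha> M - p_crit m X) \<sim>[at_top] (\<lambda>M. c48 / real M powr (\<alpha> - 2))))
       \<and> (\<alpha> = 2 \<longrightarrow>
           (\<lambda>M. p_M m X \<alpha> M - p_crit m X) \<sim>[at_top]
             (\<lambda>M. 1 / ((real m - 1) * c0) * (1 / ln (real M))))"
  using case_gt2[OF assms(1,2,3) _ assms(6)] case_eq2[OF assms(1,2,3) _ assms(6)] by blast

end
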